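(* Let $(W,S)$ be a Coxeter system with standard geometric representation on $V$. Let $C_1$ and $C_2$ be two cones in $V$. If $C_1\cap C_2=\{0\}$, then there exists a reflection ordering such that every root contained in $C_1$ is smaller than every root contained in $C_2$.
   Context: A cone in $V$ is a subset closed under nonnegative linear combinations of its elements. $V$ has basis the simple roots; $\Phi^+$ is the set of positive roots. A reflection ordering is a total ordering $\preceq$ on $\Phi^+$ such that for all $\alpha,\beta\in\Phi^+$ and $a,b>0$ with $a\alpha+b\beta\in\Phi^+$, either $\alpha\preceq a\alpha+b\beta\preceq\beta$ or $\beta\preceq a\alpha+b\beta\preceq\alpha$. *)

theory Defs
  imports Complex_Main "HOL-Library.Extended_Nat"
begin

text \<open>A Coxeter system (W,S) is determined (up to isomorphism) by its Coxeter matrix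
  m : S x S -> {1,2,...,\<infinity>}; the standard geometric representation depends only on m.\<close>

definition coxeter_matrix :: "'a set \<Rightarrow> ('a \<Rightarrow> 'a \<Rightarrow> enat) \<Rightarrow> bool" where
  "coxeter_matrix S m \<longleftrightarrow>
     (\<forall>s\<in>S. m s s = 1) \<and>
     (\<forall>s\<in>S. \<forall>t\<in>S. m s t = m t s) \<and>
     (\<forall>s\<in>S. \<forall>t\<in>S. s \<noteq> t \<longrightarrow> m s t \<ge> 2)"

text \<open>The space V: real vectors with basis indexed by S, i.e. finitely supported
  functions S -> real (the simple root alpha_s is the indicator of s).\<close>

definition vspace :: "'a set \<Rightarrow> ('a \<Rightarrow> real) set" where
  "vspace S = {v. (\<forall>x. x \<notin> S \<longrightarrow> v x = 0) \<and> finite {x. v x \<noteq> 0}}"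

definition simple_root :: "'a \<Rightarrow> ('a \<Rightarrow> real)" where
  "simple_root s = (\<lambda>x. if x = s then 1 else 0)"

definition bcoef :: "('a \<Rightarrow> 'a \<Rightarrow> enat) \<Rightarrow> 'a \<Rightarrow> 'a \<Rightarrow> real" where
  "bcoef m s t = (case m s t of enat k \<Rightarrow> - cos (pi / real k) | \<infinity> \<Rightarrow> -1)"

definition bform :: "('a \<Rightarrow> 'a \<Rightarrow> enat) \<Rightarrow> ('a \<Rightarrow> real) \<Rightarrow> ('a \<Rightarrow> real) \<Rightarrow> real" where
  "bform m u v = (\<Sum>s\<in>{x. u x \<noteq> 0}. \<Sum>t\<in>{y. v y \<noteq> 0}. u s * v t * bcoef m s t)"

definition sreflect :: "('a \<Rightarrow> 'a \<Rightarrow> enat) \<Rightarrow> 'a \<Rightarrow> ('a \<Rightarrow> real) \<Rightarrow> ('a \<Rightarrow> real)" where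
  "sreflect m s v = (\<lambda>x. v x - 2 * bform m (simple_root s) v * simple_root s x)"

text \<open>The root system Phi = W \<cdot> {alpha_s : s \<in> S}, W generated by the simple reflections.\<close>

inductive_set roots :: "'a set \<Rightarrow> ('a \<Rightarrow> 'a \<Rightarrow> enat) \<Rightarrow> ('a \<Rightarrow> real) set"
  for S m where
  simple: "s \<in> S \<Longrightarrow> simple_root s \<in> roots S m"
| refl_step: "s \<in> S \<Longrightarrow> v \<in> roots S m \<Longrightarrow> sreflect m s v \<in> roots S m"

definition pos_roots :: "'a set \<Rightarrow> ('a \<Rightarrow> 'a \<Rightarrow> enat) \<Rightarrow> ('a \<Rightarrow> real) set" where
  "pos_roots S m = {v \<in> roots S m. \<forall>x. v x \<ge> 0}"

definition lincomb2 :: "real \<Rightarrow> ('a \<Rightarrow> real) \<Rightarrow> real \<Rightarrow> ('a \<Rightarrow> real) \<Rightarrow> ('a \<Rightarrow> real)" where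
  "lincomb2 a x b y = (\<lambda>i. a * x i + b * y i)"

definition reflection_ordering ::
  "'a set \<Rightarrow> ('a \<Rightarrow> 'a \<Rightarrow> enat) \<Rightarrow> (('a \<Rightarrow> real) \<times> ('a \<Rightarrow> real)) set \<Rightarrow> bool" where
  "reflection_ordering S m r \<longleftrightarrow>
     linear_order_on (pos_roots S m) r \<and> r \<subseteq> pos_roots S m \<times> pos_roots S m \<and>
     (\<forall>\<alpha>\<in>pos_roots S m. \<forall>\<beta>\<in>pos_roots S m. \<forall>a b :: real. a > 0 \<longrightarrow> b > 0 \<longrightarrow>
        lincomb2 a \<alpha> b \<beta> \<in> pos_roots S m \<longrightarrow>
        ((\<alpha>, lincomb2 a \<alpha> b \<beta>) \<in> r \<and> (lincomb2 a \<alpha> b \<beta>, \<beta>) \<in> r) \<or>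
        ((\<beta>, lincomb2 a \<alpha> b \<beta>) \<in> r \<and> (lincomb2 a \<alpha> b \<beta>, \<alpha>) \<in> r))"

definition cone_in :: "'a set \<Rightarrow> ('a \<Rightarrow> real) set \<Rightarrow> bool" where
  "cone_in S C \<longleftrightarrow> C \<subseteq> vspace S \<and> (\<lambda>_. 0) \<in> C \<and>
     (\<forall>x\<in>C. \<forall>y\<in>C. \<forall>a b :: real. a \<ge> 0 \<longrightarrow> b \<ge> 0 \<longrightarrow> lincomb2 a x b y \<in> C)"

end

theory Submission imports Defs begin

definition supp :: "('a \<Rightarrow> real) \<Rightarrow> 'a set" where "supp v = {x. v x \<noteq> 0}"

definition fsum :: "('a \<Rightarrow> real) \<Rightarrow> real" where "fsum v = (\<Sum>x\<in>{x. v x \<noteq> 0}. v x)"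

lemma fsum_eq: "finite A \<Longrightarrow> {x. v x \<noteq> 0} \<subseteq> A \<Longrightarrow> fsum v = (\<Sum>x\<in>A. v x)"
  unfolding fsum_def by (rule sum.mono_neutral_left) auto

lemma bform_eq:
  assumes "finite A" "{x. u x \<noteq> 0} \<subseteq> A" "finite B" "{x. v x \<noteq> 0} \<subseteq> B"
  shows "bform m u v = (\<Sum>s\<in>A. \<Sum>t\<in>B. u s * v t * bcoef m s t)"
proof -
  have "bform m u v = (\<Sum>s\<in>{x. u x \<noteq> 0}. \<Sum>t\<in>B. u s * v t * bcoef m s t)"
    unfolding bform_def
    by (rule sum.cong[OF refl], rule sum.mono_neutral_left) (use assms in auto)
  also have "\<dots> = (\<Sum>s\<in>A. \<Sum>t\<in>B. u s * v t * bcoef m s t)"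
    by (rule sum.mono_neutral_left) (use assms in auto)
  finally show ?thesis .
qed

lemma supp_lin: "{i. a * x i + b * (y i::real) \<noteq> 0} \<subseteq> {i. x i \<noteq> 0} \<union> {i. y i \<noteq> 0}"
  by force

lemma fsum_lin:
  assumes "finite {i. x i \<noteq> 0}" "finite {i. y i \<noteq> 0}"
  shows "fsum (lincomb2 a x b y) = a * fsum x + b * fsum y"
proof -
  let ?A = "{i. x i \<noteq> 0} \<union> {i. y i \<noteq> 0}"
  have "fsum (lincomb2 a x b y) = (\<Sum>i\<in>?A. a * x i + b * y i)"
    unfolding lincomb2_def by (rule fsum_eq) (use assms in \<open>auto intro: finite_subset[OF supp_lin]\<close>)
  also have "\<dots> = a * (\<Sum>i\<in>?A. x i) + b * (\<Sum>i\<in>?A. y i)"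
    by (simp add: sum.distrib sum_distrib_left)
  also have "\<dots> = a * fsum x + b * fsum y"
    using assms by (simp add: fsum_eq[of ?A])
  finally show ?thesis .
qed

lemma bform_lin_left:
  assumes "finite {i. x i \<noteq> 0}" "finite {i. y i \<noteq> 0}" "finite {i. z i \<noteq> 0}"
  shows "bform m (lincomb2 a x b y) z = a * bform m x z + b * bform m y z"
proof -
  let ?A = "{i. x i \<noteq> 0} \<union> {i. y i \<noteq> 0}" and ?B = "{i. z i \<noteq> 0}"
  have "bform m (lincomb2 a x b y) z = (\<Sum>s\<in>?A. \<Sum>t\<in>?B. (a * x s + b * y s) * z t * bcoef m s t)"
    unfolding lincomb2_def by (rule bform_eq) (use assms in auto)
  also have "\<dots> = a * (\<Sum>s\<in>?A. \<Sum>t\<in>?B. x s * z t * bcoef m s t) + b * (\<Sum>s\<in>?A. \<Sum>t\<in>?B. y s * z t * bcoef m s t)"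
    by (simp add: sum.distrib sum_distrib_left algebra_simps)
  also have "\<dots> = a * bform m x z + b * bform m y z"
    using assms bform_eq[of ?A x ?B z m] bform_eq[of ?A y ?B z m] by auto
  finally show ?thesis .
qed

lemma bform_lin_right:
  assumes "finite {i. x i \<noteq> 0}" "finite {i. y i \<noteq> 0}" "finite {i. z i \<noteq> 0}"
  shows "bform m z (lincomb2 a x b y) = a * bform m z x + b * bform m z y"
proof -
  let ?A = "{i. x i \<noteq> 0} \<union> {i. y i \<noteq> 0}" and ?B = "{i. z i \<noteq> 0}"
  have "bform m z (lincomb2 a x b y) = (\<Sum>s\<in>?B. \<Sum>t\<in>?A. z s * (a * x t + b * y t) * bcoef m s t)"
    unfolding lincomb2_def by (rule bform_eq) (use assms in auto)
  also have "\<dots> = a * (\<Sum>s\<in>?B. \<Sum>t\<in>?A. z s * x t * bcoef m s t) + b * (\<Sum>s\<in>?B. \<Sum>t\<in>?A. z s * y t * bcoef m s t)"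
    by (simp add: sum.distrib sum_distrib_left algebra_simps)
  also have "\<dots> = a * bform m z x + b * bform m z y"
    using assms bform_eq[of ?B z ?A x m] bform_eq[of ?B z ?A y m] by auto
  finally show ?thesis .
qed

lemma bform_sym:
  assumes "coxeter_matrix S m" "x \<in> vspace S" "y \<in> vspace S"
  shows "bform m x y = bform m y x"
proof -
  let ?A = "{i. x i \<noteq> 0}" and ?B = "{i. y i \<noteq> 0}"
  have fa: "finite ?A" "finite ?B" using assms by (auto simp: vspace_def)
  have sub: "?A \<subseteq> S" "?B \<subseteq> S" using assms by (auto simp: vspace_def)
  have "bform m x y = (\<Sum>s\<in>?A. \<Sum>t\<in>?B. x s * y t * bcoef m s t)"
    by (rule bform_eq) (use fa in auto)
  also have "\<dots> = (\<Sum>t\<in>?B. \<Sum>s\<in>?A. x s * y t * bcoef m s t)"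
    by (rule sum.swap)
  also have "\<dots> = (\<Sum>t\<in>?B. \<Sum>s\<in>?A. y t * x s * bcoef m t s)"
  proof (intro sum.cong refl)
    fix t s assume "t \<in> ?B" "s \<in> ?A"
    then have "s \<in> S" "t \<in> S" using sub by auto
    then have "m s t = m t s" using assms(1) by (auto simp: coxeter_matrix_def)
    then show "x s * y t * bcoef m s t = y t * x s * bcoef m t s" by (simp add: bcoef_def)
  qed
  also have "\<dots> = bform m y x"
    by (rule bform_eq[symmetric]) (use fa in auto)
  finally show ?thesis .
qed

lemma bform_simple: "coxeter_matrix S m \<Longrightarrow> s \<in> S \<Longrightarrow> bform m (simple_root s) (simple_root s) = 1"
proof -
  assume a: "coxeter_matrix S m" "s \<in> S"
  have "{x. simple_root s x \<noteq> (0::real)} = {s}" by (auto simp: simple_root_def)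
  then have "bform m (simple_root s) (simple_root s) = bcoef m s s"
    unfolding bform_def by (simp add: simple_root_def)
  also have "m s s = enat 1" using a by (simp add: coxeter_matrix_def one_enat_def)
  then have "bcoef m s s = 1" by (simp add: bcoef_def)
  finally show ?thesis .
qed

lemma simple_vspace: "s \<in> S \<Longrightarrow> simple_root s \<in> vspace S"
  by (auto simp: vspace_def simple_root_def)

lemma sreflect_lc: "sreflect m s v = lincomb2 1 v (- 2 * bform m (simple_root s) v) (simple_root s)"
  by (auto simp: sreflect_def lincomb2_def)

lemma lc_vspace: "x \<in> vspace S \<Longrightarrow> y \<in> vspace S \<Longrightarrow> lincomb2 a x b y \<in> vspace S"
  unfolding vspace_def lincomb2_def
  by (auto intro: finite_subset[OF supp_lin])

lemma roots_vspace: "v \<in> roots S m \<Longrightarrow> v \<in> vspace S"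
  by (induction rule: roots.induct) (auto simp: simple_vspace sreflect_lc intro!: lc_vspace)

lemma vs_fin: "v \<in> vspace S \<Longrightarrow> finite {x. v x \<noteq> 0}"
  by (simp add: vspace_def)

lemma roots_norm:
  assumes "coxeter_matrix S m" shows "v \<in> roots S m \<Longrightarrow> bform m v v = 1"
proof (induction rule: roots.induct)
  case (simple s) then show ?case using bform_simple[OF assms] by simp
next
  case (refl_step s v)
  let ?a = "simple_root s" and ?c = "bform m (simple_root s) v"
  have va: "?a \<in> vspace S" "v \<in> vspace S" using simple_vspace[OF refl_step(1)] roots_vspace[OF refl_step(2)] by auto
  have f: "finite {x. ?a x \<noteq> 0}" "finite {x. v x \<noteq> 0}" using vs_fin[OF va(1)] vs_fin[OF va(2)] by auto
  have fw: "finite {x. lincomb2 1 v (-2 * ?c) ?a x \<noteq> 0}"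
    using vs_fin[OF lc_vspace[OF va(2) va(1)]] .
  have aa: "bform m ?a ?a = 1" using bform_simple[OF assms refl_step(1)] .
  have sy: "bform m v ?a = ?c" using bform_sym[OF assms va(2) va(1)] .
  define w where "w = lincomb2 1 v (-2 * ?c) ?a"
  have fw': "finite {x. w x \<noteq> 0}" using fw unfolding w_def .
  have e1: "bform m w w = 1 * bform m v w + (-2 * ?c) * bform m ?a w"
  proof -
    have "bform m (lincomb2 1 v (-2 * ?c) ?a) w = 1 * bform m v w + (-2 * ?c) * bform m ?a w"
      by (rule bform_lin_left[OF f(2) f(1) fw'])
    then show ?thesis unfolding w_def[symmetric] .
  qed
  have e2: "bform m v w = 1 * bform m v v + (-2 * ?c) * bform m v ?a"
    unfolding w_def by (rule bform_lin_right[OF f(2) f(1) f(2)])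
  have e3: "bform m ?a w = 1 * bform m ?a v + (-2 * ?c) * bform m ?a ?a"
    unfolding w_def by (rule bform_lin_right[OF f(2) f(1) f(1)])
  have "bform m (sreflect m s v) (sreflect m s v) = bform m w w"
    unfolding sreflect_lc w_def ..
  also have "\<dots> = 1" using e1 e2 e3 sy aa refl_step(3) proof -
    have "bform m w w = 1 * (1 * bform m v v + (-2 * ?c) * ?c) + (-2 * ?c) * (1 * ?c + (-2 * ?c) * 1)"
      using e1 e2 e3 sy aa by simp
    then show ?thesis using refl_step(3) by (simp add: algebra_simps)
  qed
  finally show ?case .
qed


lemma bform_scale_left:
  assumes "c \<noteq> 0" shows "bform m (\<lambda>i. c * u i) v = c * bform m u v"
proof -
  have "{x. c * u x \<noteq> 0} = {x. u x \<noteq> 0}" using assms by auto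
  then show ?thesis unfolding bform_def by (simp add: sum_distrib_left algebra_simps)
qed

lemma bform_scale_right:
  assumes "c \<noteq> 0" shows "bform m u (\<lambda>i. c * v i) = c * bform m u v"
proof -
  have "{x. c * v x \<noteq> 0} = {x. v x \<noteq> 0}" using assms by auto
  then show ?thesis unfolding bform_def by (simp add: sum_distrib_left algebra_simps)
qed

lemma bform_zero: "bform m (\<lambda>_. 0) v = 0"
  unfolding bform_def by simp

lemma fsum_zero_nonneg:
  assumes "finite {x. v x \<noteq> 0}" "\<forall>x. v x \<ge> 0" "fsum v = 0"
  shows "v = (\<lambda>_. 0)"
proof
  fix x
  have "\<forall>y\<in>{x. v x \<noteq> 0}. v y = 0"
    using assms sum_nonneg_eq_0_iff[of "{x. v x \<noteq> 0}" v] by (auto simp: fsum_def)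
  then show "v x = 0" by auto
qed

lemma pr_root: "\<alpha> \<in> pos_roots S m \<Longrightarrow> \<alpha> \<in> roots S m" by (simp add: pos_roots_def)
lemma pr_nonneg: "\<alpha> \<in> pos_roots S m \<Longrightarrow> \<alpha> x \<ge> 0" by (simp add: pos_roots_def)

lemma pr_fsum_pos:
  assumes "coxeter_matrix S m" "\<alpha> \<in> pos_roots S m"
  shows "fsum \<alpha> > 0"
proof -
  have r: "\<alpha> \<in> roots S m" using assms(2) by (simp add: pos_roots_def)
  have n: "bform m \<alpha> \<alpha> = 1" using roots_norm[OF assms(1) r] .
  have f: "finite {x. \<alpha> x \<noteq> 0}" using vs_fin[OF roots_vspace[OF r]] .
  have ge: "fsum \<alpha> \<ge> 0" unfolding fsum_def by (rule sum_nonneg) (use pr_nonneg[OF assms(2)] in auto)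
  have "fsum \<alpha> \<noteq> 0"
  proof
    assume "fsum \<alpha> = 0"
    then have "\<alpha> = (\<lambda>_. 0)" using fsum_zero_nonneg f pr_nonneg[OF assms(2)] by blast
    then show False using n bform_zero[of m "\<lambda>_. 0"] by simp
  qed
  then show ?thesis using ge by simp
qed

lemma parallel_eq:
  assumes "coxeter_matrix S m" "\<alpha> \<in> pos_roots S m" "\<beta> \<in> pos_roots S m"
    and "\<And>i. fsum \<alpha> * \<beta> i = fsum \<beta> * \<alpha> i"
  shows "\<alpha> = \<beta>"
proof -
  define c where "c = fsum \<beta> / fsum \<alpha>"
  have pa: "fsum \<alpha> > 0" and pb: "fsum \<beta> > 0" using pr_fsum_pos assms by blast+
  have c: "c > 0" using pa pb by (simp add: c_def)
  have be: "\<beta> = (\<lambda>i. c * \<alpha> i)"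
  proof
    fix i show "\<beta> i = c * \<alpha> i" using assms(4)[of i] pa by (simp add: c_def field_simps)
  qed
  have "1 = bform m \<beta> \<beta>" using roots_norm[OF assms(1) pr_root[OF assms(3)]] by simp
  also have "\<dots> = c * (c * bform m \<alpha> \<alpha>)"
    using be bform_scale_left[of c m \<alpha>] bform_scale_right[of c m \<alpha>] c by simp
  also have "\<dots> = c * c" using roots_norm[OF assms(1) pr_root[OF assms(2)]] by simp
  finally have "c * c = 1" by simp
  then have "c = 1" using c by (metis mult_cancel_left1 mult_le_cancel_left1 nle_le not_less_iff_gr_or_eq mult_less_cancel_left1)
  then show ?thesis using be by simp
qed


definition cone :: "('a \<Rightarrow> real) set \<Rightarrow> bool" where
  "cone P \<longleftrightarrow> (\<lambda>_. 0) \<in> P \<and> (\<forall>x\<in>P. \<forall>y\<in>P. \<forall>a b. a \<ge> 0 \<longrightarrow> b \<ge> 0 \<longrightarrow> lincomb2 a x b y \<in> P)"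

definition pointed :: "('a \<Rightarrow> real) set \<Rightarrow> bool" where
  "pointed P \<longleftrightarrow> (\<forall>x. x \<in> P \<longrightarrow> (\<lambda>i. - x i) \<in> P \<longrightarrow> x = (\<lambda>_. 0))"

lemma cone_lc: "cone P \<Longrightarrow> x \<in> P \<Longrightarrow> y \<in> P \<Longrightarrow> a \<ge> 0 \<Longrightarrow> b \<ge> 0 \<Longrightarrow> lincomb2 a x b y \<in> P"
  by (simp add: cone_def)

lemma cone_scale: "cone P \<Longrightarrow> x \<in> P \<Longrightarrow> a \<ge> 0 \<Longrightarrow> (\<lambda>i. a * x i) \<in> P"
  using cone_lc[of P x x a 0] by (simp add: lincomb2_def)

lemma maximal_total:
  assumes "cone M" "pointed M" "\<forall>X. cone X \<and> pointed X \<and> M \<subseteq> X \<longrightarrow> X = M"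
  shows "v \<in> M \<or> (\<lambda>i. - v i) \<in> M"
proof (rule ccontr)
  assume nv: "\<not> (v \<in> M \<or> (\<lambda>i. - v i) \<in> M)"
  define P where "P = {lincomb2 1 p t v | p t. p \<in> M \<and> t \<ge> 0}"
  have MP: "M \<subseteq> P"
  proof
    fix x assume "x \<in> M"
    moreover have "x = lincomb2 1 x 0 v" by (simp add: lincomb2_def)
    ultimately show "x \<in> P" unfolding P_def by fastforce
  qed
  have vP: "v \<in> P"
  proof -
    have "v = lincomb2 1 (\<lambda>_. 0) 1 v" by (simp add: lincomb2_def)
    moreover have "(\<lambda>_. 0) \<in> M" using assms(1) by (simp add: cone_def)
    ultimately show ?thesis unfolding P_def by fastforce
  qed
  have cP: "cone P"
    unfolding cone_def
  proof (intro conjI ballI allI impI)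
    show "(\<lambda>_. 0) \<in> P" using MP assms(1) by (auto simp: cone_def)
  next
    fix x y a b assume x: "x \<in> P" and y: "y \<in> P" and a: "(a::real) \<ge> 0" and b: "(b::real) \<ge> 0"
    from x obtain p t where p: "p \<in> M" "t \<ge> 0" "x = lincomb2 1 p t v" unfolding P_def by blast
    from y obtain p' t' where p': "p' \<in> M" "t' \<ge> 0" "y = lincomb2 1 p' t' v" unfolding P_def by blast
    have "lincomb2 a x b y = lincomb2 1 (lincomb2 a p b p') (a * t + b * t') v"
      using p p' by (auto simp: lincomb2_def algebra_simps)
    moreover have "lincomb2 a p b p' \<in> M" using cone_lc[OF assms(1) p(1) p'(1) a b] .
    moreover have "a * t + b * t' \<ge> 0" using a b p p' by simp
    ultimately show "lincomb2 a x b y \<in> P" unfolding P_def by blast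
  qed
  have pP: "pointed P"
    unfolding pointed_def
  proof (intro allI impI)
    fix x assume x: "x \<in> P" and nx: "(\<lambda>i. - x i) \<in> P"
    from x obtain p t where p: "p \<in> M" "t \<ge> 0" "x = lincomb2 1 p t v" unfolding P_def by blast
    from nx obtain p' t' where p': "p' \<in> M" "t' \<ge> 0" "(\<lambda>i. - x i) = lincomb2 1 p' t' v" unfolding P_def by blast
    have eq: "\<And>i. p i + p' i + (t + t') * v i = 0"
    proof -
      fix i
      have "- x i = p' i + t' * v i" using fun_cong[OF p'(3), of i] by (simp add: lincomb2_def)
      moreover have "x i = p i + t * v i" using p(3) by (simp add: lincomb2_def)
      ultimately show "p i + p' i + (t + t') * v i = 0" by (simp add: algebra_simps)
    qed
    show "x = (\<lambda>_. 0)"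
    proof (cases "t + t' = 0")
      case True
      then have tt: "t = 0" "t' = 0" using p p' by auto
      have "x = p" using p(3) tt by (auto simp: lincomb2_def)
      moreover have "(\<lambda>i. - p i) = p'"
      proof
        fix i show "- p i = p' i" using eq[of i] tt by simp
      qed
      ultimately show ?thesis using assms(2) p(1) p'(1) unfolding pointed_def by auto
    next
      case False
      then have pos: "t + t' > 0" using p p' by simp
      have "(\<lambda>i. - v i) = lincomb2 (1 / (t + t')) p (1 / (t + t')) p'"
      proof
        fix i
        have "(t + t') * v i = - (p i + p' i)" using eq[of i] by simp
        then have "- v i = (p i + p' i) / (t + t')" using pos by (simp add: field_simps)
        then show "- v i = lincomb2 (1 / (t + t')) p (1 / (t + t')) p' i"
          by (simp add: lincomb2_def add_divide_distrib)
      qed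
      moreover have "lincomb2 (1 / (t + t')) p (1 / (t + t')) p' \<in> M"
        using cone_lc[OF assms(1) p(1) p'(1)] pos by simp
      ultimately show ?thesis using nv by simp
    qed
  qed
  have "P = M" using assms(3) cP pP MP by blast
  then show False using vP nv by blast
qed

lemma exists_total_cone:
  assumes "cone K" "pointed K"
  shows "\<exists>M. cone M \<and> pointed M \<and> K \<subseteq> M \<and> (\<forall>v. v \<in> M \<or> (\<lambda>i. - v i) \<in> M)"
proof -
  define F where "F = {P. cone P \<and> pointed P \<and> K \<subseteq> P}"
  have "\<forall>C\<in>chains F. \<exists>U\<in>F. \<forall>X\<in>C. X \<subseteq> U"
  proof
    fix C assume C: "C \<in> chains F"
    show "\<exists>U\<in>F. \<forall>X\<in>C. X \<subseteq> U"
    proof (cases "C = {}")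
      case True then show ?thesis using assms by (auto simp: F_def)
    next
      case False
      have CF: "C \<subseteq> F" and ch: "\<forall>X\<in>C. \<forall>Y\<in>C. X \<subseteq> Y \<or> Y \<subseteq> X"
        using C by (auto simp: chains_def chain_subset_def)
      have two: "\<exists>Z\<in>C. x \<in> Z \<and> y \<in> Z" if xy: "x \<in> \<Union>C" "y \<in> \<Union>C" for x y
      proof -
        obtain X Y where "X \<in> C" "Y \<in> C" "x \<in> X" "y \<in> Y" using xy by blast
        then show ?thesis using ch by blast
      qed
      have "\<Union>C \<in> F"
        unfolding F_def
      proof (intro CollectI conjI)
        show "cone (\<Union>C)" unfolding cone_def
        proof (intro conjI ballI allI impI)
          obtain X where "X \<in> C" using False by blast
          then show "(\<lambda>_. 0) \<in> \<Union>C" using CF by (auto simp: F_def cone_def)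
        next
          fix x y a b assume "x \<in> \<Union>C" "y \<in> \<Union>C" "(a::real) \<ge> 0" "(b::real) \<ge> 0"
          then obtain Z where "Z \<in> C" "x \<in> Z" "y \<in> Z" using two by blast
          moreover have "cone Z" using CF \<open>Z \<in> C\<close> by (auto simp: F_def)
          ultimately have "lincomb2 a x b y \<in> Z" using cone_lc \<open>a \<ge> 0\<close> \<open>b \<ge> 0\<close> by blast
          then show "lincomb2 a x b y \<in> \<Union>C" using \<open>Z \<in> C\<close> by blast
        qed
      next
        show "pointed (\<Union>C)" unfolding pointed_def
        proof (intro allI impI)
          fix x assume "x \<in> \<Union>C" "(\<lambda>i. - x i) \<in> \<Union>C"
          then obtain Z where "Z \<in> C" "x \<in> Z" "(\<lambda>i. - x i) \<in> Z" using two by blast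
          then show "x = (\<lambda>_. 0)" using CF by (auto simp: F_def pointed_def)
        qed
      next
        obtain X where "X \<in> C" using False by blast
        then show "K \<subseteq> \<Union>C" using CF by (auto simp: F_def)
      qed
      then show ?thesis by blast
    qed
  qed
  from Zorn_Lemma2[OF this] obtain M where M: "M \<in> F" "\<forall>X\<in>F. M \<subseteq> X \<longrightarrow> X = M" by blast
  have "\<forall>X. cone X \<and> pointed X \<and> M \<subseteq> X \<longrightarrow> X = M"
    using M by (auto simp: F_def)
  then show ?thesis using M(1) maximal_total[of M] by (auto simp: F_def)
qed


definition Kset :: "('a \<Rightarrow> real) set \<Rightarrow> ('a \<Rightarrow> real) set \<Rightarrow> ('a \<Rightarrow> real) set" where
  "Kset C1 C2 = {lincomb2 1 c2 (-1) c1 | c1 c2. c1 \<in> C1 \<and> c2 \<in> C2 \<and> (\<forall>x. c1 x \<ge> 0) \<and> (\<forall>x. c2 x \<ge> 0) \<and> fsum c1 = fsum c2}"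

lemma cone_in_lc: "cone_in S C \<Longrightarrow> x \<in> C \<Longrightarrow> y \<in> C \<Longrightarrow> a \<ge> 0 \<Longrightarrow> b \<ge> 0 \<Longrightarrow> lincomb2 a x b y \<in> C"
  by (simp add: cone_in_def)

lemma cone_in_fin: "cone_in S C \<Longrightarrow> x \<in> C \<Longrightarrow> finite {i. x i \<noteq> 0}"
  by (auto simp: cone_in_def vspace_def)

lemma fsum_zero: "fsum (\<lambda>_. 0) = 0" by (simp add: fsum_def)

lemma K_cone:
  assumes "cone_in S C1" "cone_in S C2"
  shows "cone (Kset C1 C2)"
  unfolding cone_def
proof (intro conjI ballI allI impI)
  have "(\<lambda>_. 0) = lincomb2 1 (\<lambda>_. 0) (-1) (\<lambda>_. 0)" by (simp add: lincomb2_def)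
  moreover have "(\<lambda>_. 0) \<in> C1" "(\<lambda>_. 0) \<in> C2" using assms by (auto simp: cone_in_def)
  ultimately show "(\<lambda>_. 0) \<in> Kset C1 C2" unfolding Kset_def by fastforce
next
  fix x y a b assume x: "x \<in> Kset C1 C2" and y: "y \<in> Kset C1 C2" and a: "(a::real) \<ge> 0" and b: "(b::real) \<ge> 0"
  from x obtain c1 c2 where c: "x = lincomb2 1 c2 (-1) c1" "c1 \<in> C1" "c2 \<in> C2" "\<forall>x. c1 x \<ge> 0" "\<forall>x. c2 x \<ge> 0" "fsum c1 = fsum c2"
    unfolding Kset_def by blast
  from y obtain d1 d2 where d: "y = lincomb2 1 d2 (-1) d1" "d1 \<in> C1" "d2 \<in> C2" "\<forall>x. d1 x \<ge> 0" "\<forall>x. d2 x \<ge> 0" "fsum d1 = fsum d2"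
    unfolding Kset_def by blast
  have "lincomb2 a x b y = lincomb2 1 (lincomb2 a c2 b d2) (-1) (lincomb2 a c1 b d1)"
    using c d by (auto simp: lincomb2_def algebra_simps)
  moreover have "lincomb2 a c1 b d1 \<in> C1" using cone_in_lc[OF assms(1) c(2) d(2) a b] .
  moreover have "lincomb2 a c2 b d2 \<in> C2" using cone_in_lc[OF assms(2) c(3) d(3) a b] .
  moreover have "\<forall>x. lincomb2 a c1 b d1 x \<ge> 0" "\<forall>x. lincomb2 a c2 b d2 x \<ge> 0"
    using c d a b by (auto simp: lincomb2_def)
  moreover have "fsum (lincomb2 a c1 b d1) = fsum (lincomb2 a c2 b d2)"
    using fsum_lin[OF cone_in_fin[OF assms(1) c(2)] cone_in_fin[OF assms(1) d(2)]]
      fsum_lin[OF cone_in_fin[OF assms(2) c(3)] cone_in_fin[OF assms(2) d(3)]] c d by simp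
  ultimately show "lincomb2 a x b y \<in> Kset C1 C2" unfolding Kset_def by blast
qed

lemma K_pointed:
  assumes "cone_in S C1" "cone_in S C2" "C1 \<inter> C2 = {\<lambda>_. 0}"
  shows "pointed (Kset C1 C2)"
  unfolding pointed_def
proof (intro allI impI)
  fix x assume x: "x \<in> Kset C1 C2" and nx: "(\<lambda>i. - x i) \<in> Kset C1 C2"
  from x obtain c1 c2 where c: "x = lincomb2 1 c2 (-1) c1" "c1 \<in> C1" "c2 \<in> C2" "\<forall>x. c1 x \<ge> 0" "\<forall>x. c2 x \<ge> 0" "fsum c1 = fsum c2"
    unfolding Kset_def by blast
  from nx obtain d1 d2 where d: "(\<lambda>i. - x i) = lincomb2 1 d2 (-1) d1" "d1 \<in> C1" "d2 \<in> C2" "\<forall>x. d1 x \<ge> 0" "\<forall>x. d2 x \<ge> 0" "fsum d1 = fsum d2"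
    unfolding Kset_def by blast
  have eq: "lincomb2 1 c2 1 d2 = lincomb2 1 c1 1 d1"
  proof
    fix i
    have "- x i = d2 i - d1 i" using fun_cong[OF d(1), of i] by (simp add: lincomb2_def)
    moreover have "x i = c2 i - c1 i" using c(1) by (simp add: lincomb2_def)
    ultimately show "lincomb2 1 c2 1 d2 i = lincomb2 1 c1 1 d1 i" by (simp add: lincomb2_def)
  qed
  have "lincomb2 1 c2 1 d2 \<in> C2" using cone_in_lc[OF assms(2) c(3) d(3)] by simp
  moreover have "lincomb2 1 c1 1 d1 \<in> C1" using cone_in_lc[OF assms(1) c(2) d(2)] by simp
  ultimately have "lincomb2 1 c2 1 d2 = (\<lambda>_. 0)" using eq assms(3) by auto
  then have z2: "c2 = (\<lambda>_. 0)"
  proof -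
    assume h: "lincomb2 1 c2 1 d2 = (\<lambda>_. 0)"
    show ?thesis
    proof
      fix i have "c2 i + d2 i = 0" using fun_cong[OF h, of i] by (simp add: lincomb2_def)
      then show "c2 i = 0" using c(5) d(5) by (metis add_nonneg_eq_0_iff)
    qed
  qed
  then have "fsum c1 = 0" using c(6) fsum_zero by simp
  then have z1: "c1 = (\<lambda>_. 0)" using fsum_zero_nonneg cone_in_fin[OF assms(1) c(2)] c(4) by blast
  show "x = (\<lambda>_. 0)" using c(1) z1 z2 by (simp add: lincomb2_def)
qed


definition gv :: "('a \<Rightarrow> real) \<Rightarrow> ('a \<Rightarrow> real) \<Rightarrow> ('a \<Rightarrow> real)" where
  "gv \<alpha> \<beta> = lincomb2 (fsum \<alpha>) \<beta> (- fsum \<beta>) \<alpha>"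

lemma pr_fin: "\<alpha> \<in> pos_roots S m \<Longrightarrow> finite {i. \<alpha> i \<noteq> 0}"
  using vs_fin[OF roots_vspace[OF pr_root]] .

theorem corollary3p2:
  fixes S :: "'a set" and m :: "'a \<Rightarrow> 'a \<Rightarrow> enat"
    and C1 C2 :: "('a \<Rightarrow> real) set"
  assumes "coxeter_matrix S m"
    and "cone_in S C1" and "cone_in S C2"
    and "C1 \<inter> C2 = {\<lambda>_. 0}"
  shows "\<exists>r. reflection_ordering S m r \<and>
           (\<forall>\<alpha>\<in>pos_roots S m \<inter> C1. \<forall>\<beta>\<in>pos_roots S m \<inter> C2. (\<alpha>, \<beta>) \<in> r \<and> \<alpha> \<noteq> \<beta>)"
proof -
  let ?P = "pos_roots S m"
  obtain M where M: "cone M" "pointed M" "Kset C1 C2 \<subseteq> M" "\<And>v. v \<in> M \<or> (\<lambda>i. - v i) \<in> M"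
    using exists_total_cone[OF K_cone[OF assms(2,3)] K_pointed[OF assms(2,3,4)]] by blast
  define r where "r = {(\<alpha>, \<beta>). \<alpha> \<in> ?P \<and> \<beta> \<in> ?P \<and> gv \<alpha> \<beta> \<in> M}"
  have fpos: "\<And>\<alpha>. \<alpha> \<in> ?P \<Longrightarrow> fsum \<alpha> > 0" using pr_fsum_pos[OF assms(1)] by blast
  have gneg: "gv \<beta> \<alpha> = (\<lambda>i. - gv \<alpha> \<beta> i)" for \<alpha> \<beta> :: "'a \<Rightarrow> real"
    by (auto simp: gv_def lincomb2_def)
  have M0: "(\<lambda>_. 0) \<in> M" using M(1) by (simp add: cone_def)
  have refl: "refl_on ?P r"
    unfolding refl_on_def r_def
  proof (intro ballI, simp)
    fix \<alpha> assume "\<alpha> \<in> ?P"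
    have "gv \<alpha> \<alpha> = (\<lambda>_. 0)" by (auto simp: gv_def lincomb2_def)
    then show "gv \<alpha> \<alpha> \<in> M" using M0 by simp
  qed
  have trans: "trans r"
    unfolding trans_def
  proof (intro allI impI)
    fix \<alpha> \<beta> \<gamma> assume ab: "(\<alpha>, \<beta>) \<in> r" and bc: "(\<beta>, \<gamma>) \<in> r"
    then have P: "\<alpha> \<in> ?P" "\<beta> \<in> ?P" "\<gamma> \<in> ?P" and g: "gv \<alpha> \<beta> \<in> M" "gv \<beta> \<gamma> \<in> M" by (auto simp: r_def)
    have fb: "fsum \<beta> > 0" using fpos P by blast
    have "gv \<alpha> \<gamma> = lincomb2 (fsum \<alpha> / fsum \<beta>) (gv \<beta> \<gamma>) (fsum \<gamma> / fsum \<beta>) (gv \<alpha> \<beta>)"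
    proof
      fix i show "gv \<alpha> \<gamma> i = lincomb2 (fsum \<alpha> / fsum \<beta>) (gv \<beta> \<gamma>) (fsum \<gamma> / fsum \<beta>) (gv \<alpha> \<beta>) i"
        using fb by (simp add: gv_def lincomb2_def field_simps)
    qed
    moreover have "lincomb2 (fsum \<alpha> / fsum \<beta>) (gv \<beta> \<gamma>) (fsum \<gamma> / fsum \<beta>) (gv \<alpha> \<beta>) \<in> M"
      using cone_lc[OF M(1) g(2) g(1)] fpos P by (simp add: less_imp_le)
    ultimately show "(\<alpha>, \<gamma>) \<in> r" using P by (simp add: r_def)
  qed
  have antisym: "antisym r"
    unfolding antisym_def
  proof (intro allI impI)
    fix \<alpha> \<beta> assume ab: "(\<alpha>, \<beta>) \<in> r" and ba: "(\<beta>, \<alpha>) \<in> r"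
    then have P: "\<alpha> \<in> ?P" "\<beta> \<in> ?P" and g: "gv \<alpha> \<beta> \<in> M" "gv \<beta> \<alpha> \<in> M" by (auto simp: r_def)
    have "gv \<alpha> \<beta> = (\<lambda>_. 0)" using M(2) g gneg[of \<beta> \<alpha>] unfolding pointed_def by metis
    then have "\<And>i. fsum \<alpha> * \<beta> i = fsum \<beta> * \<alpha> i"
      by (metis (no_types, lifting) add.inverse_inverse add_uminus_conv_diff eq_iff_diff_eq_0
          gv_def lincomb2_def mult_minus_left)
    then show "\<alpha> = \<beta>" using parallel_eq[OF assms(1) P] by blast
  qed
  have total: "total_on ?P r"
    unfolding total_on_def
  proof (intro ballI impI)
    fix \<alpha> \<beta> assume P: "\<alpha> \<in> ?P" "\<beta> \<in> ?P"
    show "(\<alpha>, \<beta>) \<in> r \<or> (\<beta>, \<alpha>) \<in> r" using M(4)[of "gv \<alpha> \<beta>"] gneg[of \<beta> \<alpha>] P by (auto simp: r_def)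
  qed
  have sub: "r \<subseteq> ?P \<times> ?P" by (auto simp: r_def)
  have between: "\<forall>\<alpha>\<in>?P. \<forall>\<beta>\<in>?P. \<forall>a b :: real. a > 0 \<longrightarrow> b > 0 \<longrightarrow>
        lincomb2 a \<alpha> b \<beta> \<in> ?P \<longrightarrow>
        ((\<alpha>, lincomb2 a \<alpha> b \<beta>) \<in> r \<and> (lincomb2 a \<alpha> b \<beta>, \<beta>) \<in> r) \<or>
        ((\<beta>, lincomb2 a \<alpha> b \<beta>) \<in> r \<and> (lincomb2 a \<alpha> b \<beta>, \<alpha>) \<in> r)"
  proof (intro ballI allI impI)
    fix \<alpha> \<beta> a b assume P: "\<alpha> \<in> ?P" "\<beta> \<in> ?P" and a: "(a::real) > 0" and b: "(b::real) > 0"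
      and gP: "lincomb2 a \<alpha> b \<beta> \<in> ?P"
    define \<gamma> where "\<gamma> = lincomb2 a \<alpha> b \<beta>"
    have fg: "fsum \<gamma> = a * fsum \<alpha> + b * fsum \<beta>"
      unfolding \<gamma>_def by (rule fsum_lin[OF pr_fin[OF P(1)] pr_fin[OF P(2)]])
    have e1: "gv \<alpha> \<gamma> = (\<lambda>i. b * gv \<alpha> \<beta> i)"
      by (rule ext) (simp add: fg gv_def, simp add: \<gamma>_def lincomb2_def algebra_simps)
    have e2: "gv \<gamma> \<beta> = (\<lambda>i. a * gv \<alpha> \<beta> i)"
      by (rule ext) (simp add: fg gv_def, simp add: \<gamma>_def lincomb2_def algebra_simps)
    have e3: "gv \<beta> \<gamma> = (\<lambda>i. a * gv \<beta> \<alpha> i)" using e2 gneg by (metis mult_minus_right)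
    have e4: "gv \<gamma> \<alpha> = (\<lambda>i. b * gv \<beta> \<alpha> i)" using e1 gneg by (metis mult_minus_right)
    have gP': "\<gamma> \<in> ?P" using gP \<gamma>_def by simp
    show "((\<alpha>, lincomb2 a \<alpha> b \<beta>) \<in> r \<and> (lincomb2 a \<alpha> b \<beta>, \<beta>) \<in> r) \<or>
        ((\<beta>, lincomb2 a \<alpha> b \<beta>) \<in> r \<and> (lincomb2 a \<alpha> b \<beta>, \<alpha>) \<in> r)"
      unfolding \<gamma>_def[symmetric]
    proof (cases "gv \<alpha> \<beta> \<in> M")
      case True
      then have "gv \<alpha> \<gamma> \<in> M" "gv \<gamma> \<beta> \<in> M" using e1 e2 cone_scale[OF M(1)] a b by auto
      then show "((\<alpha>, \<gamma>) \<in> r \<and> (\<gamma>, \<beta>) \<in> r) \<or> ((\<beta>, \<gamma>) \<in> r \<and> (\<gamma>, \<alpha>) \<in> r)"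
        using P gP' by (simp add: r_def)
    next
      case False
      then have "gv \<beta> \<alpha> \<in> M" using M(4)[of "gv \<alpha> \<beta>"] gneg[of \<beta> \<alpha>] by simp
      then have "gv \<beta> \<gamma> \<in> M" "gv \<gamma> \<alpha> \<in> M" using e3 e4 cone_scale[OF M(1)] a b by auto
      then show "((\<alpha>, \<gamma>) \<in> r \<and> (\<gamma>, \<beta>) \<in> r) \<or> ((\<beta>, \<gamma>) \<in> r \<and> (\<gamma>, \<alpha>) \<in> r)"
        using P gP' by (simp add: r_def)
    qed
  qed
  have ro: "reflection_ordering S m r"
    unfolding reflection_ordering_def linear_order_on_def partial_order_on_def preorder_on_def
    using refl trans antisym total sub between by blast
  have sep: "\<forall>\<alpha>\<in>?P \<inter> C1. \<forall>\<beta>\<in>?P \<inter> C2. (\<alpha>, \<beta>) \<in> r \<and> \<alpha> \<noteq> \<beta>"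
  proof (intro ballI conjI)
    fix \<alpha> \<beta> assume A: "\<alpha> \<in> ?P \<inter> C1" and B: "\<beta> \<in> ?P \<inter> C2"
    have fa: "fsum \<alpha> > 0" and fb: "fsum \<beta> > 0" using A B fpos by auto
    define c1 where "c1 = (\<lambda>i. fsum \<beta> * \<alpha> i)"
    define c2 where "c2 = (\<lambda>i. fsum \<alpha> * \<beta> i)"
    have c1: "c1 = lincomb2 (fsum \<beta>) \<alpha> 0 \<alpha>" by (auto simp: c1_def lincomb2_def)
    have c2: "c2 = lincomb2 (fsum \<alpha>) \<beta> 0 \<beta>" by (auto simp: c2_def lincomb2_def)
    have "c1 \<in> C1" unfolding c1 using cone_in_lc[OF assms(2)] A fb by simp
    moreover have "c2 \<in> C2" unfolding c2 using cone_in_lc[OF assms(3)] B fa by simp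
    moreover have "\<forall>x. c1 x \<ge> 0" "\<forall>x. c2 x \<ge> 0"
      using A B fa fb pr_nonneg[of \<alpha> S m] pr_nonneg[of \<beta> S m] by (auto simp: c1_def c2_def)
    moreover have "fsum c1 = fsum c2"
    proof -
      have a1: "\<alpha> \<in> ?P" and b1: "\<beta> \<in> ?P" using A B by auto
      show ?thesis unfolding c1 c2
        using fsum_lin[OF pr_fin[OF a1] pr_fin[OF a1], of "fsum \<beta>" 0]
          fsum_lin[OF pr_fin[OF b1] pr_fin[OF b1], of "fsum \<alpha>" 0] by simp
    qed
    moreover have "gv \<alpha> \<beta> = lincomb2 1 c2 (-1) c1" by (auto simp: gv_def lincomb2_def c1_def c2_def)
    ultimately have "gv \<alpha> \<beta> \<in> Kset C1 C2" unfolding Kset_def by blast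
    then show "(\<alpha>, \<beta>) \<in> r" using M(3) A B by (auto simp: r_def)
    show "\<alpha> \<noteq> \<beta>"
    proof
      assume "\<alpha> = \<beta>"
      then have "\<alpha> = (\<lambda>_. 0)" using A B assms(4) by auto
      then show False using fa fsum_zero by (metis less_irrefl)
    qed
  qed
  show ?thesis using ro sep by blast
qed

end
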